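(* Let $r\ge 3$ and $k\ge 2$ be integers and $n=2k\cdot 3^{r-1}$. Then there exists an $r$-regular word of length $n$ over a three-letter alphabet.
   Context: For a word $u=u_1\cdots u_m$ over an alphabet $\mathcal A$ with $b$ letters and an integer $r\ge -1$, $u$ is $r$-regular if for every $k=0,1,\dots,r$ the sum $\sum_{1\le t\le m,\ u_t=c} t^k$ is the same for all letters $c\in\mathcal A$ (a letter not occurring contributes $0$). Here $b=3$. *)

theory Defs
  imports Main
begin

text \<open>A word u = u_1 ... u_m is a list (u ! (t-1) = u_t). For an alphabet A,
 u is r-regular if for every k = 0..r the power sums of positions of each letter
 coincide for all letters of A.\<close>

definition power_sum :: "'a list \<Rightarrow> 'a \<Rightarrow> nat \<Rightarrow> nat" where
  "power_sum u c k = (\<Sum>t\<in>{t. 1 \<le> t \<and> t \<le> length u \<and> u ! (t - 1) = c}. t ^ k)"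

definition regular_word :: "'a set \<Rightarrow> int \<Rightarrow> 'a list \<Rightarrow> bool" where
  "regular_word A r u \<longleftrightarrow> set u \<subseteq> A \<and>
     (\<forall>k::nat. int k \<le> r \<longrightarrow> (\<forall>c\<in>A. \<forall>d\<in>A. power_sum u c k = power_sum u d k))"

end

theory Submission
  imports Defs
begin

definition pss :: "nat \<Rightarrow> 'a list \<Rightarrow> 'a \<Rightarrow> nat \<Rightarrow> nat" where
  "pss s u c k = (\<Sum>t<length u. if u ! t = c then (t + 1 + s) ^ k else 0)"

definition reg :: "nat \<Rightarrow> nat list \<Rightarrow> bool" where
  "reg r w \<longleftrightarrow> set w \<subseteq> {0,1,2} \<and> (\<forall>k\<le>r. pss 0 w 0 k = pss 0 w 1 k \<and> pss 0 w 1 k = pss 0 w 2 k)"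

lemma sum_lt_split: "(\<Sum>t<m+n. f t) = (\<Sum>t<m. f t) + (\<Sum>t<n. f (m + t))" for f :: "nat \<Rightarrow> nat"
  by (induction n) auto

lemma pss_append: "pss s (u @ v) c k = pss s u c k + pss (s + length u) v c k"
proof -
  have "pss s (u @ v) c k = (\<Sum>t<length u + length v. if (u@v) ! t = c then (t + 1 + s) ^ k else 0)"
    by (simp add: pss_def)
  also have "\<dots> = (\<Sum>t<length u. if (u@v) ! t = c then (t + 1 + s) ^ k else 0)
       + (\<Sum>t<length v. if (u@v) ! (length u + t) = c then (length u + t + 1 + s) ^ k else 0)"
    by (rule sum_lt_split)  
  also have "\<dots> = pss s u c k + pss (s + length u) v c k"
    by (simp add: pss_def nth_append, intro sum.cong refl, simp add: ac_simps)
  finally show ?thesis .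
qed

lemma pss_shift: "pss s v c k = (\<Sum>j\<le>k. (k choose j) * s ^ (k - j) * pss 0 v c j)"
proof -
  have "pss s v c k = (\<Sum>t<length v. \<Sum>j\<le>k. (k choose j) * s ^ (k - j) * (if v ! t = c then (t+1) ^ j else 0))"
    unfolding pss_def
  proof (rule sum.cong[OF refl])
    fix t
    have "(t+1+s)^k = (\<Sum>j\<le>k. (k choose j) * s^(k-j) * (t+1)^j)"
      using binomial_ring[of "t+1" s k] by (simp add: ac_simps)
    then show "(if v ! t = c then (t + 1 + s) ^ k else 0) = (\<Sum>j\<le>k. (k choose j) * s ^ (k - j) * (if v ! t = c then (t+1) ^ j else 0))"
      by simp
  qed
  also have "\<dots> = (\<Sum>j\<le>k. (k choose j) * s ^ (k - j) * pss 0 v c j)"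
  proof -
    have e: "pss 0 v c j = (\<Sum>t<length v. if v ! t = c then (t+1) ^ j else 0)" for j
      by (simp only: pss_def add_0_right)
    show ?thesis unfolding e sum_distrib_left by (rule sum.swap)
  qed
  finally show ?thesis .
qed

lemma pss_map:
  assumes "\<forall>x\<in>set w. f x = c \<longleftrightarrow> x = d"
  shows "pss s (map f w) c k = pss s w d k"
  unfolding pss_def
proof (rule sum.cong)
  fix t assume "t \<in> {..<length w}"
  then have "w ! t \<in> set w" by simp
  then have "(f (w ! t) = c) = (w ! t = d)" using assms by blast
  then show "(if map f w ! t = c then (t + 1 + s) ^ k else 0) = (if w ! t = d then (t + 1 + s) ^ k else 0)"
    using \<open>t \<in> {..<length w}\<close> by simp
qed simp

lemma ps_set: "{t. 1 \<le> t \<and> t \<le> length u \<and> u ! (t - 1) = c} = Suc ` {t. t < length u \<and> u ! t = c}"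
proof
  show "{t. 1 \<le> t \<and> t \<le> length u \<and> u ! (t - 1) = c} \<subseteq> Suc ` {t. t < length u \<and> u ! t = c}"
  proof
    fix t assume "t \<in> {t. 1 \<le> t \<and> t \<le> length u \<and> u ! (t - 1) = c}"
    then have t: "1 \<le> t" "t \<le> length u" "u ! (t - 1) = c" by auto
    then have "t = Suc (t - 1)" "t - 1 < length u" by arith+
    then show "t \<in> Suc ` {t. t < length u \<and> u ! t = c}" using t(3) by (intro image_eqI[of t Suc "t - 1"]) auto
  qed
next
  show "Suc ` {t. t < length u \<and> u ! t = c} \<subseteq> {t. 1 \<le> t \<and> t \<le> length u \<and> u ! (t - 1) = c}"
    by auto
qed

lemma ps_eq: "power_sum u c k = pss 0 u c k"
proof -
  have "power_sum u c k = (\<Sum>t\<in>{t. t < length u \<and> u ! t = c}. Suc t ^ k)"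
    unfolding power_sum_def ps_set by (subst sum.reindex) auto
  also have "\<dots> = (\<Sum>t\<in>{t\<in>{..<length u}. u ! t = c}. Suc t ^ k)"
    by (rule sum.cong) auto
  also have "\<dots> = pss 0 u c k"
    by (subst sum.inter_filter) (simp_all only: pss_def add_0_right Suc_eq_plus1 finite_lessThan)
  finally show ?thesis .
qed

lemma pss_append0: "pss 0 (u @ v) c k = pss 0 u c k + (\<Sum>j\<le>k. (k choose j) * length u ^ (k - j) * pss 0 v c j)"
  using pss_append[of 0 u v c k] pss_shift[of "length u" v c k] by simp

lemma regD: "reg r w \<Longrightarrow> k \<le> r \<Longrightarrow> pss 0 w 1 k = pss 0 w 0 k \<and> pss 0 w 2 k = pss 0 w 0 k"
  unfolding reg_def by auto

lemma reg_append:
  assumes "reg r u" "reg r v" shows "reg r (u @ v)"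
proof -
  have "pss 0 (u@v) c k = pss 0 (u@v) 0 k" if "k \<le> r" "c \<in> {1,2}" for c k
  proof -
    have "(\<Sum>j\<le>k. (k choose j) * length u ^ (k - j) * pss 0 v c j) = (\<Sum>j\<le>k. (k choose j) * length u ^ (k - j) * pss 0 v 0 j)"
      using regD[OF assms(2)] that by (intro sum.cong refl) auto
    moreover have "pss 0 u c k = pss 0 u 0 k" using regD[OF assms(1)] that by auto
    ultimately show ?thesis by (simp add: pss_append0)
  qed
  note eq = this
  have s: "set (u @ v) \<subseteq> {0,1,2}" using assms unfolding reg_def by auto
  show ?thesis unfolding reg_def
  proof (rule conjI[OF s], intro allI impI)
    fix k assume k: "k \<le> r"
    show "pss 0 (u @ v) 0 k = pss 0 (u @ v) 1 k \<and> pss 0 (u @ v) 1 k = pss 0 (u @ v) 2 k"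
      using eq[OF k, of 1] eq[OF k, of 2] by simp
  qed
qed

lemma reg_nil: "reg r []"
  by (simp add: reg_def pss_def)

lemma reg_concat: "reg r w \<Longrightarrow> reg r (concat (replicate a w))"
  by (induction a) (auto simp: reg_nil reg_append)

definition sg :: "nat \<Rightarrow> nat" where "sg x = (x + 1) mod 3"
definition sg2 :: "nat \<Rightarrow> nat" where "sg2 x = (x + 2) mod 3"
definition tri :: "nat list \<Rightarrow> nat list" where "tri w = w @ map sg w @ map sg2 w"

lemma sg_iff: assumes "x \<in> {0,1,2}" "c \<in> {0,1,2}" shows "sg x = c \<longleftrightarrow> x = (c + 2) mod 3"
proof -
  have "x = 0 \<or> x = 1 \<or> x = 2" "c = 0 \<or> c = 1 \<or> c = 2" using assms by auto
  then show ?thesis unfolding sg_def by (elim disjE) simp_all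
qed
lemma sg2_iff: assumes "x \<in> {0,1,2}" "c \<in> {0,1,2}" shows "sg2 x = c \<longleftrightarrow> x = (c + 1) mod 3"
proof -
  have "x = 0 \<or> x = 1 \<or> x = 2" "c = 0 \<or> c = 1 \<or> c = 2" using assms by auto
  then show ?thesis unfolding sg2_def by (elim disjE) simp_all
qed

lemma split_last: "(\<Sum>j\<le>k. f j) = (\<Sum>j<k. f j) + (f k :: nat)" for f :: "nat \<Rightarrow> nat"
  using sum.lessThan_Suc[of f k] by (simp add: lessThan_Suc_atMost)

definition GG :: "nat list \<Rightarrow> nat \<Rightarrow> nat" where
  "GG w k = (\<Sum>j<k. (k choose j) * length w ^ (k - j) * pss 0 w 0 j)
     + (\<Sum>j<k. (k choose j) * (length w + length w) ^ (k - j) * pss 0 w 0 j)"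

lemma lt3: "x < (3::nat) \<Longrightarrow> x \<in> {0,1,2}"
  by (auto simp: numeral_3_eq_3 less_Suc_eq)

lemma tri_formula:
  assumes w: "set w \<subseteq> {0,1,2}" and c: "c \<in> {0,1,2}"
    and h: "\<And>j d. j < k \<Longrightarrow> d \<in> {0,1,2} \<Longrightarrow> pss 0 w d j = pss 0 w 0 j"
  shows "pss 0 (tri w) c k = pss 0 w c k + pss 0 w ((c+2) mod 3) k + pss 0 w ((c+1) mod 3) k
     + GG w k"
proof -
  let ?m = "length w"
  have m1: "pss s (map sg w) c k' = pss s w ((c+2) mod 3) k'" for s k'
    using w c by (intro pss_map) (auto simp: sg_iff)
  have m2: "pss s (map sg2 w) c k' = pss s w ((c+1) mod 3) k'" for s k'
    using w c by (intro pss_map) (auto simp: sg2_iff)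
  have c2: "(c+2) mod 3 \<in> {0,1,2}" by (rule lt3) simp
  have c1: "(c+1) mod 3 \<in> {0,1,2}" by (rule lt3) simp
  note hd2 = h[OF _ c2]
  note hd1 = h[OF _ c1]
  have "pss 0 (tri w) c k = pss 0 w c k + pss ?m (map sg w) c k + pss (?m + ?m) (map sg2 w) c k"
    by (simp add: tri_def pss_append)
  also have "\<dots> = pss 0 w c k + (\<Sum>j\<le>k. (k choose j) * ?m ^ (k - j) * pss 0 w ((c+2) mod 3) j)
     + (\<Sum>j\<le>k. (k choose j) * (?m + ?m) ^ (k - j) * pss 0 w ((c+1) mod 3) j)"
    by (simp only: m1 m2 pss_shift[of "length w"] pss_shift[of "length w + length w"])
  also have "(\<Sum>j\<le>k. (k choose j) * ?m ^ (k - j) * pss 0 w ((c+2) mod 3) j)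
     = (\<Sum>j<k. (k choose j) * ?m ^ (k - j) * pss 0 w 0 j) + pss 0 w ((c+2) mod 3) k"
  proof -
    have "(\<Sum>j<k. (k choose j) * ?m ^ (k - j) * pss 0 w ((c+2) mod 3) j) = (\<Sum>j<k. (k choose j) * ?m ^ (k - j) * pss 0 w 0 j)"
      by (rule sum.cong[OF refl], subst hd2, simp_all)
    then show ?thesis unfolding split_last by simp
  qed
  also have "(\<Sum>j\<le>k. (k choose j) * (?m + ?m) ^ (k - j) * pss 0 w ((c+1) mod 3) j)
     = (\<Sum>j<k. (k choose j) * (?m + ?m) ^ (k - j) * pss 0 w 0 j) + pss 0 w ((c+1) mod 3) k"
  proof -
    have "(\<Sum>j<k. (k choose j) * (?m + ?m) ^ (k - j) * pss 0 w ((c+1) mod 3) j) = (\<Sum>j<k. (k choose j) * (?m + ?m) ^ (k - j) * pss 0 w 0 j)"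
      by (rule sum.cong[OF refl], subst hd1, simp_all)
    then show ?thesis unfolding split_last by simp
  qed
  finally show ?thesis by (simp add: GG_def)
qed

lemma reg_tri:
  assumes "reg r w" shows "reg (Suc r) (tri w)"
proof -
  have w: "set w \<subseteq> {0,1,2}" using assms by (simp add: reg_def)
  have st: "set (tri w) \<subseteq> {0,1,2}"
    using w by (auto simp: tri_def sg_def sg2_def)
  have "pss 0 (tri w) 0 k = pss 0 (tri w) 1 k \<and> pss 0 (tri w) 1 k = pss 0 (tri w) 2 k" if k: "k \<le> Suc r" for k
  proof -
    have h: "pss 0 w d j = pss 0 w 0 j" if j: "j < k" and d: "d \<in> {0,1,2}" for j d
    proof -
      have jr: "j \<le> r" using j k by simp
      have "d = 0 \<or> d = 1 \<or> d = 2" using d by simp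
      then show ?thesis using regD[OF assms jr] by auto
    qed
    have m: "(0+2) mod 3 = (2::nat)" "(0+1) mod 3 = (1::nat)" "(1+2) mod 3 = (0::nat)"
      "(1+1) mod 3 = (2::nat)" "(2+2) mod 3 = (1::nat)" "(2+1) mod 3 = (0::nat)" by simp_all
    have e0: "pss 0 (tri w) 0 k = pss 0 w 0 k + pss 0 w 2 k + pss 0 w 1 k + GG w k"
      using tri_formula[OF w _ h, of 0] unfolding m by simp
    have e1: "pss 0 (tri w) 1 k = pss 0 w 1 k + pss 0 w 0 k + pss 0 w 2 k + GG w k"
      using tri_formula[OF w _ h, of 1] unfolding m by simp
    have e2: "pss 0 (tri w) 2 k = pss 0 w 2 k + pss 0 w 1 k + pss 0 w 0 k + GG w k"
      using tri_formula[OF w _ h, of 2] unfolding m by simp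
    show ?thesis using e0 e1 e2 by linarith
  qed
  then show ?thesis using st by (simp add: reg_def)
qed

lemma reg_iter: "reg r w \<Longrightarrow> reg (r + n) ((tri ^^ n) w)"
  by (induction n) (auto simp: reg_tri)

lemma len_tri: "length (tri w) = 3 * length w"
  by (simp add: tri_def)

lemma len_iter: "length ((tri ^^ n) w) = 3 ^ n * length w"
  by (induction n) (auto simp: len_tri)

definition w6 :: "nat list" where "w6 = [0,1,2,2,1,0]"
definition w36 :: "nat list" where
  "w36 = [2, 1, 2, 1, 0, 0, 0, 0, 0, 1, 2, 1, 1, 2, 1, 2, 2, 2, 2, 1, 0, 0, 1, 0, 2, 0, 1, 0, 1, 2, 0, 2, 1, 1, 0, 2]"

lemma pss_Nil: "pss s [] c k = 0"
  by (simp add: pss_def)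

lemma pss_Cons: "pss s (x # xs) c k = (if x = c then (s + 1) ^ k else 0) + pss (s + 1) xs c k"
  using pss_append[of s "[x]" xs c k] by (simp add: pss_def)

lemma pss_Cons0: "pss 0 (x # xs) c k = (if x = c then 1 else 0) + pss 1 xs c k"
  using pss_Cons[of 0 x xs c k] by simp

lemma pss_Cons1: "pss 1 (x # xs) c k = (if x = c then 2 ^ k else 0) + pss 2 xs c k"
  using pss_Cons[of 1 x xs c k, unfolded one_add_one] .

lemma pss_ConsN: "pss (numeral n) (x # xs) c k = (if x = c then (numeral n + 1) ^ k else 0) + pss (numeral n + 1) xs c k"
  by (rule pss_Cons)

lemma all1: "(\<forall>k::nat\<le>1. P k) \<longleftrightarrow> P 0 \<and> P 1"
  by (auto simp: le_Suc_eq)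

lemma all3: "(\<forall>k::nat\<le>3. P k) \<longleftrightarrow> P 0 \<and> P 1 \<and> P 2 \<and> P 3"
  by (auto simp: le_Suc_eq numeral_3_eq_3 numeral_2_eq_2)

lemma reg_w6: "reg 1 w6"
  unfolding reg_def w6_def all1 by (simp add: pss_Nil pss_Cons0 pss_Cons1 pss_ConsN del: One_nat_def)

lemma reg_w36: "reg 3 w36"
  unfolding reg_def w36_def all3 by (simp add: pss_Nil pss_Cons0 pss_Cons1 pss_ConsN del: One_nat_def)

lemma exists_reg_word:
  assumes r: "r \<ge> 3" and k: "k \<ge> 2"
  shows "\<exists>w. reg r w \<and> length w = 2 * k * 3 ^ (r - 1)"
proof -
  define n where "n = r - 3"
  have rn: "r = 3 + n" and r1: "r - 1 = n + 2" using r by (auto simp: n_def)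
  define W4 where "W4 = (tri ^^ n) w36"
  define W6 where "W6 = (tri ^^ n) (tri (tri w6))"
  have R4: "reg r W4" unfolding W4_def rn by (rule reg_iter[OF reg_w36])
  have "reg 3 (tri (tri w6))" using reg_tri[OF reg_tri[OF reg_w6]] by (simp add: numeral_3_eq_3)
  then have R6: "reg r W6" unfolding W6_def rn by (rule reg_iter)
  have L4: "length W4 = 4 * 3 ^ (r - 1)" unfolding W4_def len_iter r1 by (simp add: w36_def power_add)
  have L6: "length W6 = 6 * 3 ^ (r - 1)" unfolding W6_def len_iter r1 by (simp add: w6_def len_tri power_add)
  obtain a b where ab: "2 * k = 4 * a + 6 * b"
  proof (cases "even k")
    case True then show ?thesis using that[of "k div 2" 0] by auto
  next
    case False
    then obtain c where c: "k = 2 * c + 1" by (auto elim!: oddE)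
    with k have "c \<ge> 1" by linarith
    then have "2 * k = 4 * (c - 1) + 6 * 1" using c by linarith
    then show ?thesis by (rule that)
  qed
  let ?w = "concat (replicate a W4) @ concat (replicate b W6)"
  have "reg r ?w" by (intro reg_append reg_concat R4 R6)
  moreover have "length ?w = 2 * k * 3 ^ (r - 1)"
  proof -
    have "length ?w = a * (4 * 3 ^ (r - 1)) + b * (6 * 3 ^ (r - 1))"
      by (simp add: length_concat sum_list_replicate L4 L6)
    also have "\<dots> = (4 * a + 6 * b) * 3 ^ (r - 1)" by (simp add: algebra_simps)
    also have "\<dots> = 2 * k * 3 ^ (r - 1)" using ab by simp
    finally show ?thesis .
  qed
  ultimately show ?thesis by blast
qed

theorem mainTheorem13:
  fixes r k :: nat and A :: "'a set"
  assumes "r \<ge> 3" and "k \<ge> 2" and "card A = 3"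
  shows "\<exists>u. length u = 2 * k * 3 ^ (r - 1) \<and> regular_word A (int r) u"
proof -
  obtain x y z where A: "A = {x, y, z}" and d: "x \<noteq> y" "y \<noteq> z" "x \<noteq> z"
    using assms(3) unfolding card_3_iff by blast
  obtain w where w: "reg r w" "length w = 2 * k * 3 ^ (r - 1)"
    using exists_reg_word[OF assms(1,2)] by blast
  define g where "g i = (if i = 0 then x else if i = (1::nat) then y else z)" for i
  have sw: "set w \<subseteq> {0,1,2}" using w(1) by (simp add: reg_def)
  have gi: "power_sum (map g w) (g i) j = pss 0 w i j" if "i \<in> {0,1,2}" for i j
    unfolding ps_eq
    by (rule pss_map) (use sw that d in \<open>auto simp: g_def\<close>)
  have "regular_word A (int r) (map g w)"
    unfolding regular_word_def
  proof (intro conjI allI impI ballI)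
    show "set (map g w) \<subseteq> A" using sw by (auto simp: A g_def)
  next
    fix j :: nat and c d' assume j: "int j \<le> int r" and c: "c \<in> A" and d': "d' \<in> A"
    have jr: "j \<le> r" using j by simp
    have e: "power_sum (map g w) e j = pss 0 w 0 j" if "e \<in> A" for e
    proof -
      have "e = g 0 \<or> e = g 1 \<or> e = g 2" using that by (auto simp: A g_def)
      then show ?thesis using gi[of 0 j] gi[of 1 j] gi[of 2 j] regD[OF w(1) jr] by auto
    qed
    show "power_sum (map g w) c j = power_sum (map g w) d' j" using e[OF c] e[OF d'] by simp
  qed
  moreover have "length (map g w) = 2 * k * 3 ^ (r - 1)" using w(2) by (simp only: length_map)
  ultimately show ?thesis by blast
qed

end
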